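(* Consider the pay-to-bid game without re-entry with $n\ge 2$ players and fixed $\rho\le 0$, played according to its unique symmetric subgame perfect equilibrium. As $\frac{v-s}{c}\to\infty$ (equivalently, as $\lambda:=\frac{u(c)}{u(v-s)}\to 0^+$): (I) the expected number of rounds of the game tends to infinity; (II) if $n>2$, the probability that the number of active players is reduced to exactly two at some round before the game ends tends to $1$, i.e. $\Pr\{T_{n,2}<T_{n,1}\}\to 1$; (III) if $n>2$, $\frac{\mathbb{E}[T_{n,2}]}{\mathbb{E}[T_{n,1}]}\to 0$, i.e. the expected time until $n-2$ players have exited is negligible relative to the expected length of the auction.
   Context: Pay-to-bid game: an object has monetary value $v>0$ that is common knowledge; there are $n\ge 2$ players; the bid fee is $c>0$ and the fixed sale price is $s\ge 0$, with $c<v-s$. Play proceeds in rounds with complete information. In each round every active player simultaneously chooses an action in $\{\text{Bid},\text{No Bid}\}$. Each Bid costs $c$, paid immediately to the seller. If exactly one active player bids, she wins the object (value $v$), pays $s$, and the game ends; if two or more bid, play continues; if none bids, the round is replayed (a replay is not counted as a new round). Without re-entry, the active players in the next round are exactly those who bid in the current round. Players do not discount; payoff is $u$(final wealth) with $u(x)=\frac{1-e^{-\rho x}}{\rho}$ for a constant $\rho<0$, or $u(x)=x$ when $\rho=0$. In the unique symmetric subgame perfect equilibrium, when $m$ players are active each plays Bid with probability $1-\lambda^{1/(m-1)}$, where $\lambda=u(c)/u(v-s)$. For $1\le m<n$, $T_{n,m}$ denotes the number of rounds, in the game starting with $n$ active players, until the number of active players is at most $m$; in particular $T_{n,1}$ is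 the round in which the game ends, and $T_{n,2}<T_{n,1}$ means that at some round before the end exactly two players are active. *)

theory Defs
  imports "HOL-Analysis.Analysis"
begin

text \<open>Utility function with constant absolute risk aversion parameter rho (u(x)=x for rho=0).\<close>
definition util :: "real \<Rightarrow> real \<Rightarrow> real" where
  "util \<rho> x = (if \<rho> = 0 then x else (1 - exp (- \<rho> * x)) / \<rho>)"

definition lam :: "real \<Rightarrow> real \<Rightarrow> real \<Rightarrow> real \<Rightarrow> real" where
  "lam \<rho> v s c = util \<rho> c / util \<rho> (v - s)"

definition bid_prob :: "real \<Rightarrow> nat \<Rightarrow> real" where
  "bid_prob lm m = 1 - lm powr (1 / (real m - 1))"

text \<open>Probability that, with m active players, the next (counted, i.e. non-replayed) round
  has exactly k bidders: binomial(m,p) conditioned on at least one bidder (replays of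
  rounds with no bidder are not counted).\<close>
definition trans :: "real \<Rightarrow> nat \<Rightarrow> nat \<Rightarrow> real" where
  "trans lm m k = (let p = bid_prob lm m in
     if 1 \<le> k \<and> k \<le> m
     then real (m choose k) * p ^ k * (1 - p) ^ (m - k) / (1 - (1 - p) ^ m)
     else 0)"

text \<open>Probability of the sequence of numbers of active players ks (after rounds 1,2,...),
  starting from m active players.\<close>
fun path_prob :: "real \<Rightarrow> nat \<Rightarrow> nat list \<Rightarrow> real" where
  "path_prob lm m [] = 1"
| "path_prob lm m (k # ks) = trans lm m k * path_prob lm k ks"

text \<open>Complete plays of the game starting with n players and lasting exactly t rounds:
  the list of numbers of active players after each round; the game ends (exactly one
  bidder) at round t.\<close>
definition complete_paths :: "nat \<Rightarrow> nat \<Rightarrow> nat list set" where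
  "complete_paths n t = {xs. length xs = t \<and> 0 < t \<and> set xs \<subseteq> {1..n} \<and>
       last xs = 1 \<and> (\<forall>i < t - 1. 2 \<le> xs ! i)}"

text \<open>T_{n,m} on a play: the first round after which at most m players are active.\<close>
definition hit_time :: "nat \<Rightarrow> nat list \<Rightarrow> nat" where
  "hit_time m xs = Suc (LEAST i. i < length xs \<and> xs ! i \<le> m)"

definition expected_T :: "nat \<Rightarrow> nat \<Rightarrow> real \<Rightarrow> real" where
  "expected_T n m lm =
     (\<Sum>t. \<Sum>xs\<in>complete_paths n t. path_prob lm n xs * real (hit_time m xs))"

definition prob_T2_lt_T1 :: "nat \<Rightarrow> real \<Rightarrow> real" where
  "prob_T2_lt_T1 n lm =
     (\<Sum>t. \<Sum>xs\<in>{xs \<in> complete_paths n t. hit_time 2 xs < hit_time 1 xs}. path_prob lm n xs)"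

definition ratio_to_infinity :: "(real \<times> real \<times> real) filter" where
  "ratio_to_infinity =
     inf (filtercomap (\<lambda>(v, s, c). (v - s) / c) at_top)
         (principal {(v, s, c). 0 < v \<and> 0 < c \<and> 0 \<le> s \<and> c < v - s})"

end

theory Submission
  imports Defs
begin


definition St :: "nat \<Rightarrow> nat \<Rightarrow> nat list set" where
  "St n t = {xs. set xs \<subseteq> {2..n} \<and> length xs = t}"

lemma finite_St: "finite (St n t)"
  unfolding St_def by (rule finite_lists_length_eq) simp

lemma sum_St_Suc:
  "(\<Sum>ys\<in>St n (Suc t). f ys) = (\<Sum>k\<in>{2..n}. \<Sum>ys\<in>St n t. f (k # ys))"
proof -
  have e: "St n (Suc t) = (\<lambda>(xs, k). k#xs) ` (St n t \<times> {2..n})"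
    unfolding St_def by (rule lists_length_Suc_eq)
  have i: "inj_on (\<lambda>(xs, k). k#xs) (St n t \<times> {2..n})"
    by (auto simp: inj_on_def)
  have "(\<Sum>ys\<in>St n (Suc t). f ys) = (\<Sum>(xs,k)\<in>St n t \<times> {2..n}. f (k#xs))"
    unfolding e by (subst sum.reindex[OF i]) (simp add: case_prod_beta)
  also have "\<dots> = (\<Sum>xs\<in>St n t. \<Sum>k\<in>{2..n}. f (k#xs))"
    by (rule sum.cartesian_product[symmetric])
  also have "\<dots> = (\<Sum>k\<in>{2..n}. \<Sum>ys\<in>St n t. f (k # ys))"
    by (rule sum.swap)
  finally show ?thesis .
qed

lemma CP_0: "complete_paths n 0 = {}"
  unfolding complete_paths_def by auto

lemma CP_Suc: assumes "1 \<le> n"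
  shows "complete_paths n (Suc t) = (\<lambda>ys. ys @ [1]) ` St n t"
proof
  show "(\<lambda>ys. ys @ [1]) ` St n t \<subseteq> complete_paths n (Suc t)"
  proof
    fix xs assume "xs \<in> (\<lambda>ys. ys @ [1]) ` St n t"
    then obtain ys where ys: "ys \<in> St n t" "xs = ys @ [1]" by blast
    then have l: "length ys = t" and s: "set ys \<subseteq> {2..n}" by (auto simp: St_def)
    have "\<forall>i<t. 2 \<le> xs ! i"
    proof (intro allI impI)
      fix i assume "i < t"
      then have "ys ! i \<in> set ys" using l by simp
      then have "2 \<le> ys ! i" using s by auto
      then show "2 \<le> xs ! i" using ys(2) \<open>i<t\<close> l by (simp add: nth_append)
    qed
    then show "xs \<in> complete_paths n (Suc t)"
      using ys(2) l s assms by (auto simp: complete_paths_def)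
  qed
next
  show "complete_paths n (Suc t) \<subseteq> (\<lambda>ys. ys @ [1]) ` St n t"
  proof
    fix xs assume xs: "xs \<in> complete_paths n (Suc t)"
    then have ne: "xs \<noteq> []" and l: "length xs = Suc t" and lst: "last xs = 1"
      and s: "set xs \<subseteq> {1..n}" and g: "\<forall>i<t. 2 \<le> xs ! i"
      by (auto simp: complete_paths_def)
    have eq: "xs = butlast xs @ [1]" using ne lst by (metis append_butlast_last_id)
    have "set (butlast xs) \<subseteq> {2..n}"
    proof
      fix x assume "x \<in> set (butlast xs)"
      then obtain i where i: "i < length (butlast xs)" "butlast xs ! i = x"
        by (auto simp: in_set_conv_nth)
      then have "xs ! i = x" by (simp add: nth_butlast)
      moreover have "i < t" using i l by simp
      moreover have "xs ! i \<in> set xs" using i l by simp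
      then have "xs ! i \<in> {1..n}" using s by blast
      ultimately show "x \<in> {2..n}" using g by auto
    qed
    then have "butlast xs \<in> St n t" using l by (simp add: St_def)
    then show "xs \<in> (\<lambda>ys. ys @ [1]) ` St n t" using eq by blast
  qed
qed

lemma sum_CP_Suc: assumes "1 \<le> n"
  shows "(\<Sum>xs\<in>complete_paths n (Suc t). f xs) = (\<Sum>ys\<in>St n t. f (ys @ [1]))"
  unfolding CP_Suc[OF assms] by (subst sum.reindex) (simp_all add: inj_on_def)

lemma finite_CP: "finite (complete_paths n t)"
proof (rule finite_subset)
  show "complete_paths n t \<subseteq> {xs. set xs \<subseteq> {1..n} \<and> length xs = t}"
    by (auto simp: complete_paths_def)
qed (rule finite_lists_length_eq, simp)



definition qq :: "real \<Rightarrow> nat \<Rightarrow> real" where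
  "qq lm m = lm powr (1 / (real m - 1))"

lemma bid_prob_qq: "bid_prob lm m = 1 - qq lm m"
  by (simp add: bid_prob_def qq_def)

lemma qq_bounds: assumes "0 < lm" "lm < 1" "2 \<le> m"
  shows "0 < qq lm m" "qq lm m < 1"
proof -
  have e: "0 < 1 / (real m - 1)" using assms by simp
  show "0 < qq lm m" using assms by (simp add: qq_def)
  have "lm powr (1 / (real m - 1)) < 1 powr (1 / (real m - 1))"
    by (rule powr_less_mono2[OF e]) (use assms in auto)
  then show "qq lm m < 1" by (simp add: qq_def)
qed

lemma qq_pow: assumes "0 < lm" "2 \<le> m"
  shows "qq lm m ^ (m - 1) = lm"
proof -
  have "qq lm m ^ (m - 1) = lm powr (real (m - 1) * (1 / (real m - 1)))"
    unfolding qq_def by (rule powr_power) (use assms in simp)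
  also have "real (m - 1) * (1 / (real m - 1)) = 1" using assms by (simp add: of_nat_diff)
  finally show ?thesis using assms by simp
qed

lemma trans_eq: assumes "0 < lm" "lm < 1" "2 \<le> m"
  shows "trans lm m k = (if 1 \<le> k \<and> k \<le> m then real (m choose k) * (1 - qq lm m) ^ k * qq lm m ^ (m - k) / (1 - qq lm m ^ m) else 0)"
  by (simp add: trans_def bid_prob_qq Let_def)

lemma qq_pow_m: assumes "0 < lm" "lm < 1" "2 \<le> m"
  shows "0 < 1 - qq lm m ^ m" "1 - qq lm m ^ m \<le> 1"
proof -
  have "qq lm m ^ m < 1" using qq_bounds[OF assms] assms by (simp add: power_less_one_iff)
  then show "0 < 1 - qq lm m ^ m" by simp
  show "1 - qq lm m ^ m \<le> 1" using qq_bounds[OF assms] by simp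
qed

lemma trans_nonneg: assumes "0 < lm" "lm < 1"
  shows "0 \<le> trans lm m k"
proof (cases "2 \<le> m")
  case True
  note b = qq_bounds[OF assms True] qq_pow_m[OF assms True]
  show ?thesis unfolding trans_eq[OF assms True] using b by simp
next
  case False
  then have "m = 0 \<or> m = 1" by auto
  then show ?thesis
  proof
    assume "m = 0" then show ?thesis by (simp add: trans_def Let_def)
  next
    assume m: "m = 1"
    have "bid_prob lm m = 0" using m assms by (simp add: bid_prob_def)
    then show ?thesis using m by (simp add: trans_def Let_def)
  qed
qed

lemma trans_zero: "m < k \<Longrightarrow> trans lm m k = 0"
  by (simp add: trans_def Let_def)

lemma trans_sum_m: assumes "0 < lm" "lm < 1" "2 \<le> m"
  shows "(\<Sum>k\<in>{1..m}. trans lm m k) = 1"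
proof -
  define q where "q = qq lm m"
  define p where "p = 1 - q"
  note b = qq_bounds[OF assms] qq_pow_m[OF assms]
  have bin: "(p + q) ^ m = (\<Sum>k\<le>m. real (m choose k) * p ^ k * q ^ (m - k))"
    by (rule binomial_ring)
  have "{..m} = insert 0 {1..m}" by auto
  then have "(\<Sum>k\<le>m. real (m choose k) * p ^ k * q ^ (m - k)) =
      q ^ m + (\<Sum>k\<in>{1..m}. real (m choose k) * p ^ k * q ^ (m - k))" by simp
  then have s: "(\<Sum>k\<in>{1..m}. real (m choose k) * p ^ k * q ^ (m - k)) = 1 - q ^ m"
    using bin by (simp add: p_def)
  have "(\<Sum>k\<in>{1..m}. trans lm m k) = (\<Sum>k\<in>{1..m}. real (m choose k) * p ^ k * q ^ (m - k) / (1 - q ^ m))"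
    by (rule sum.cong) (simp_all add: trans_eq[OF assms] p_def q_def)
  also have "\<dots> = (\<Sum>k\<in>{1..m}. real (m choose k) * p ^ k * q ^ (m - k)) / (1 - q ^ m)"
    by (simp add: sum_divide_distrib)
  also have "\<dots> = 1" using s b by (simp add: q_def)
  finally show ?thesis .
qed

lemma trans_sum: assumes "0 < lm" "lm < 1" "2 \<le> m" "m \<le> n"
  shows "(\<Sum>k\<in>{1..n}. trans lm m k) = 1"
proof -
  have "{1..n} = {1..m} \<union> {m<..n}" using assms by auto
  moreover have "(\<Sum>k\<in>{m<..n}. trans lm m k) = 0" by (simp add: trans_zero)
  ultimately show ?thesis using trans_sum_m[OF assms(1-3)]
    by (simp add: sum.union_disjoint ivl_disj_int)
qed

lemma trans_1: assumes "0 < lm" "lm < 1" "2 \<le> m"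
  shows "trans lm m 1 = real m * (1 - qq lm m) * lm / (1 - qq lm m ^ m)"
proof -
  have "qq lm m ^ (m - 1) = lm" by (rule qq_pow) (use assms in auto)
  then show ?thesis unfolding trans_eq[OF assms] using assms by simp
qed

lemma trans_1_pos: assumes "0 < lm" "lm < 1" "2 \<le> m"
  shows "0 < trans lm m 1"
  unfolding trans_1[OF assms] using qq_bounds[OF assms] qq_pow_m[OF assms] assms by simp

lemma one_minus_stay: assumes "0 < lm" "lm < 1" "2 \<le> m"
  shows "real m * (1 - qq lm m) ^ (m - 1) * qq lm m \<le> 1 - trans lm m m"
proof -
  define q where "q = qq lm m"
  note b = qq_bounds[OF assms] qq_pow_m[OF assms]
  have e: "{1..m} = insert m (insert (m - 1) ({1..m} - {m, m - 1}))" using assms by auto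
  have "(\<Sum>k\<in>{1..m}. trans lm m k) = trans lm m m + (trans lm m (m - 1) + (\<Sum>k\<in>{1..m} - {m, m - 1}. trans lm m k))"
    apply (subst e) apply (subst sum.insert) using assms apply auto[2]
    apply (subst sum.insert) using assms by auto
  then have "1 = trans lm m m + trans lm m (m - 1) + (\<Sum>k\<in>{1..m} - {m, m - 1}. trans lm m k)"
    using trans_sum_m[OF assms] by simp
  moreover have "0 \<le> (\<Sum>k\<in>{1..m} - {m, m - 1}. trans lm m k)"
    by (rule sum_nonneg) (simp add: trans_nonneg assms)
  ultimately have "trans lm m (m - 1) \<le> 1 - trans lm m m" by simp
  moreover have "trans lm m (m - 1) = real m * (1 - q) ^ (m - 1) * q / (1 - q ^ m)"
  proof -
    obtain j where j: "m = Suc j" using assms by (cases m) auto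
    show ?thesis unfolding trans_eq[OF assms] q_def using assms j by simp
  qed
  moreover have "real m * (1 - q) ^ (m - 1) * q \<le> real m * (1 - q) ^ (m - 1) * q / (1 - q ^ m)"
  proof -
    have X: "0 \<le> real m * (1 - q) ^ (m - 1) * q" using b by (simp add: q_def)
    have Y: "0 < 1 - q ^ m" "1 - q ^ m \<le> 1" using b by (simp_all add: q_def)
    have "real m * (1 - q) ^ (m - 1) * q * (1 - q ^ m) \<le> real m * (1 - q) ^ (m - 1) * q"
      using mult_left_mono[OF Y(2) X] by simp
    then show ?thesis using Y by (simp add: le_divide_eq)
  qed
  ultimately show ?thesis by (simp add: q_def)
qed



lemma path_prob_nonneg: assumes "0 < lm" "lm < 1" shows "0 \<le> path_prob lm m xs"
  by (induction xs arbitrary: m) (auto simp: trans_nonneg[OF assms])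

lemma St_0: "St n 0 = {[]}" by (auto simp: St_def)

lemma hit_time_cons: assumes "\<exists>i<length xs. xs ! i \<le> m"
  shows "hit_time m (k # xs) = (if k \<le> m then 1 else Suc (hit_time m xs))"
proof (cases "k \<le> m")
  case True
  then show ?thesis unfolding hit_time_def by (subst Least_eq_0) auto
next
  case False
  obtain i where i: "i < length xs" "xs ! i \<le> m" using assms by blast
  have "(LEAST i. i < length (k # xs) \<and> (k # xs) ! i \<le> m) =
        Suc (LEAST i. Suc i < length (k # xs) \<and> (k # xs) ! Suc i \<le> m)"
    by (rule Least_Suc[where n = "Suc i"]) (use i False in auto)
  then show ?thesis using False unfolding hit_time_def by simp
qed

lemma ex_le_app1: "\<exists>i<length (ys @ [1::nat]). (ys @ [1]) ! i \<le> m" if "1 \<le> m"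
  using that by (intro exI[of _ "length ys"]) auto

lemma hit_time_single: "1 \<le> m \<Longrightarrow> hit_time m [1] = 1"
  unfolding hit_time_def by (subst Least_eq_0) auto
lemma hit_time_single1: "hit_time (Suc 0) [Suc 0] = Suc 0"
  unfolding hit_time_def by (subst Least_eq_0) auto
lemma hit_time_single2: "hit_time 2 [Suc 0] = Suc 0"
  unfolding hit_time_def by (subst Least_eq_0) auto

lemma hit1: "set ys \<subseteq> {2..n} \<Longrightarrow> hit_time 1 (ys @ [1]) = Suc (length ys)"
proof (induction ys)
  case Nil then show ?case by (simp add: hit_time_single1 hit_time_single2)
next
  case (Cons k ys)
  then show ?case using hit_time_cons[OF ex_le_app1[of 1 ys], of k] by auto
qed

lemma hit2_cons: "2 \<le> k \<Longrightarrow> hit_time 2 (k # ys @ [1]) = (if k = 2 then 1 else Suc (hit_time 2 (ys @ [1])))"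
  using hit_time_cons[OF ex_le_app1[of 2 ys], of k] by auto

lemma hit2_cons': "2 \<le> k \<Longrightarrow> hit_time 2 (k # ys @ [Suc 0]) = (if k = 2 then 1 else Suc (hit_time 2 (ys @ [Suc 0])))"
  using hit2_cons by simp

lemma hit2_lt: "set ys \<subseteq> {2..n} \<Longrightarrow> (hit_time 2 (ys @ [1]) < Suc (length ys)) = (2 \<in> set ys)"
proof (induction ys)
  case Nil then show ?case by (simp add: hit_time_single1 hit_time_single2)
next
  case (Cons k ys)
  then show ?case using hit2_cons[of k ys] by auto
qed

definition Fs :: "real \<Rightarrow> nat \<Rightarrow> nat \<Rightarrow> nat \<Rightarrow> real" where
  "Fs lm n m t = (\<Sum>ys\<in>St n t. path_prob lm m (ys @ [1]))"
definition Qs :: "real \<Rightarrow> nat \<Rightarrow> nat \<Rightarrow> nat \<Rightarrow> real" where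
  "Qs lm n m t = (\<Sum>ys\<in>St n t. if 2 \<in> set ys then path_prob lm m (ys @ [1]) else 0)"
definition Hs :: "real \<Rightarrow> nat \<Rightarrow> nat \<Rightarrow> nat \<Rightarrow> real" where
  "Hs lm n m t = (\<Sum>ys\<in>St n t. path_prob lm m (ys @ [1]) * real (hit_time 2 (ys @ [1])))"

lemma Fs_0: "Fs lm n m 0 = trans lm m 1" by (simp add: Fs_def St_0)
lemma Qs_0: "Qs lm n m 0 = 0" by (simp add: Qs_def St_0)
lemma Hs_0: "Hs lm n m 0 = trans lm m 1" by (simp add: Hs_def St_0 hit_time_single2)

lemma Fs_Suc: "Fs lm n m (Suc t) = (\<Sum>k\<in>{2..n}. trans lm m k * Fs lm n k t)"
  unfolding Fs_def sum_St_Suc by (simp add: sum_distrib_left)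

lemma Qs_Suc: "Qs lm n m (Suc t) = (\<Sum>k\<in>{2..n}. trans lm m k * (if k = 2 then Fs lm n k t else Qs lm n k t))"
  unfolding Qs_def sum_St_Suc
proof (rule sum.cong[OF refl])
  fix k assume "k \<in> {2..n}"
  show "(\<Sum>ys\<in>St n t. if 2 \<in> set (k # ys) then path_prob lm m ((k # ys) @ [1]) else 0) =
    trans lm m k * (if k = 2 then Fs lm n k t else (\<Sum>ys\<in>St n t. if 2 \<in> set ys then path_prob lm k (ys @ [1]) else 0))"
    by (cases "k = 2") (auto simp: Fs_def sum_distrib_left intro!: sum.cong)
qed

lemma Hs_Suc: "Hs lm n m (Suc t) = (\<Sum>k\<in>{2..n}. trans lm m k * (Fs lm n k t + (if k = 2 then 0 else Hs lm n k t)))"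
  unfolding Hs_def sum_St_Suc
proof (rule sum.cong[OF refl])
  fix k assume k: "k \<in> {2..n}"
  have "(\<Sum>ys\<in>St n t. path_prob lm m ((k # ys) @ [1]) * real (hit_time 2 ((k # ys) @ [1]))) =
     (\<Sum>ys\<in>St n t. trans lm m k * (path_prob lm k (ys @ [1]) + (if k = 2 then 0 else path_prob lm k (ys @ [1]) * real (hit_time 2 (ys @ [1])))))"
    using k by (intro sum.cong) (auto simp: hit2_cons' algebra_simps of_nat_Suc)
  also have "\<dots> = trans lm m k * (Fs lm n k t + (if k = 2 then 0 else (\<Sum>ys\<in>St n t. path_prob lm k (ys @ [1]) * real (hit_time 2 (ys @ [1])))))"
    by (simp add: Fs_def sum_distrib_left[symmetric] sum.distrib[symmetric])
  finally show "(\<Sum>ys\<in>St n t. path_prob lm m ((k # ys) @ [1]) * real (hit_time 2 ((k # ys) @ [1]))) =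
     trans lm m k * (Fs lm n k t + (if k = 2 then 0 else (\<Sum>ys\<in>St n t. path_prob lm k (ys @ [1]) * real (hit_time 2 (ys @ [1])))))" .
qed

lemma sum_2_3: fixes n :: nat and f :: "nat \<Rightarrow> real" assumes "2 \<le> n"
  shows "(\<Sum>k\<in>{2..n}. if k = 2 then 0 else f k) = (\<Sum>k\<in>{3..n}. (f k :: real))"
proof -
  have e: "{2..n} = insert 2 {3..n}" using assms by (auto simp: eval_nat_numeral)
  show ?thesis unfolding e by (subst sum.insert) (auto intro!: sum.cong)
qed

lemma Hs_Suc': assumes "2 \<le> n"
  shows "Hs lm n m (Suc t) = Fs lm n m (Suc t) + (\<Sum>k\<in>{3..n}. trans lm m k * Hs lm n k t)"
proof -
  have "Hs lm n m (Suc t) = (\<Sum>k\<in>{2..n}. trans lm m k * Fs lm n k t + (if k = 2 then 0 else trans lm m k * Hs lm n k t))"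
    unfolding Hs_Suc by (intro sum.cong) (auto simp: algebra_simps)
  also have "\<dots> = Fs lm n m (Suc t) + (\<Sum>k\<in>{2..n}. if k = 2 then 0 else trans lm m k * Hs lm n k t)"
    unfolding Fs_Suc by (rule sum.distrib)
  finally have "Hs lm n m (Suc t) = Fs lm n m (Suc t) + (\<Sum>k\<in>{2..n}. if k = 2 then 0 else trans lm m k * Hs lm n k t)" .
  then show ?thesis using sum_2_3[OF assms] by simp
qed

definition Ns :: "real \<Rightarrow> nat \<Rightarrow> nat \<Rightarrow> nat \<Rightarrow> real" where
  "Ns lm n m t = Fs lm n m t - Qs lm n m t"

lemma Ns_0: "Ns lm n m 0 = trans lm m 1" by (simp add: Ns_def Fs_0 Qs_0)

lemma Ns_Suc: assumes "2 \<le> n"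
  shows "Ns lm n m (Suc t) = (\<Sum>k\<in>{3..n}. trans lm m k * Ns lm n k t)"
proof -
  have "Ns lm n m (Suc t) = (\<Sum>k\<in>{2..n}. if k = 2 then 0 else trans lm m k * Ns lm n k t)"
    unfolding Ns_def Fs_Suc Qs_Suc sum_subtractf[symmetric]
    by (intro sum.cong) (auto simp: algebra_simps)
  then show ?thesis using sum_2_3[OF assms] by simp
qed

lemma Fs_nonneg: "0 < lm \<Longrightarrow> lm < 1 \<Longrightarrow> 0 \<le> Fs lm n m t"
  unfolding Fs_def by (intro sum_nonneg path_prob_nonneg)
lemma Hs_nonneg: "0 < lm \<Longrightarrow> lm < 1 \<Longrightarrow> 0 \<le> Hs lm n m t"
  unfolding Hs_def by (intro sum_nonneg mult_nonneg_nonneg path_prob_nonneg) auto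
lemma Qs_nonneg: "0 < lm \<Longrightarrow> lm < 1 \<Longrightarrow> 0 \<le> Qs lm n m t"
  unfolding Qs_def by (intro sum_nonneg) (auto intro: path_prob_nonneg)
lemma Ns_nonneg: "0 < lm \<Longrightarrow> lm < 1 \<Longrightarrow> 0 \<le> Ns lm n m t"
  unfolding Ns_def Fs_def Qs_def sum_subtractf[symmetric]
  by (intro sum_nonneg) (auto intro: path_prob_nonneg)



lemma stay_lt: assumes "0 < lm" "lm < 1" "2 \<le> m"
  shows "0 < 1 - trans lm m m"
proof -
  note b = qq_bounds[OF assms]
  have "0 < real m * (1 - qq lm m) ^ (m - 1) * qq lm m" using b assms by simp
  then show ?thesis using one_minus_stay[OF assms] by linarith
qed

lemma others_le: assumes "0 < lm" "lm < 1" "2 \<le> m" "m \<le> n" "A \<subseteq> {1..n} - {m}"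
  shows "(\<Sum>k\<in>A. trans lm m k) \<le> 1 - trans lm m m"
proof -
  have "(\<Sum>k\<in>A. trans lm m k) \<le> (\<Sum>k\<in>{1..n} - {m}. trans lm m k)"
    by (rule sum_mono2) (use assms trans_nonneg in auto)
  also have "\<dots> = 1 - trans lm m m"
    using trans_sum[OF assms(1-4)] assms by (subst sum_diff1) auto
  finally show ?thesis .
qed

lemma gen_bound:
  fixes X :: "nat \<Rightarrow> nat \<Rightarrow> real" and a :: "nat \<Rightarrow> real"
  assumes lm: "0 < lm" "lm < 1" and lo: "2 \<le> lo"
    and step: "\<And>m J. m \<in> {lo..n} \<Longrightarrow> X m (Suc J) \<le> a m + (\<Sum>k\<in>{lo..n}. trans lm m k * X k J)"
    and base: "\<And>m. m \<in> {lo..n} \<Longrightarrow> X m 0 \<le> 0"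
    and am: "\<And>m. m \<in> {lo..n} \<Longrightarrow> a m \<le> (1 - trans lm m m) * \<eta>"
    and eta: "0 \<le> \<eta>"
  shows "m \<in> {lo..n} \<Longrightarrow> X m J \<le> (real m - real lo + 1) * \<eta>"
proof (induction J arbitrary: m)
  case 0
  then have "0 \<le> (real m - real lo + 1) * \<eta>" using eta by simp
  then show ?case using base[OF 0] by linarith
next
  case (Suc J)
  note m = Suc.prems
  define s where "s = trans lm m m"
  define B where "B = (real m - real lo + 1) * \<eta>"
  have mge: "2 \<le> m" "m \<le> n" using m lo by auto
  have s0: "0 \<le> s" using trans_nonneg[OF lm] by (simp add: s_def)
  have spl: "(\<Sum>k\<in>{lo..n}. trans lm m k * X k J) = s * X m J + (\<Sum>k\<in>{lo..n} - {m}. trans lm m k * X k J)"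
    using m by (simp add: s_def sum.remove)
  have o1: "(\<Sum>k\<in>{lo..n} - {m}. trans lm m k * X k J) \<le> (\<Sum>k\<in>{lo..n} - {m}. trans lm m k * (B - \<eta>))"
  proof (rule sum_mono)
    fix k assume k: "k \<in> {lo..n} - {m}"
    show "trans lm m k * X k J \<le> trans lm m k * (B - \<eta>)"
    proof (cases "m < k")
      case True then show ?thesis by (simp add: trans_zero)
    next
      case False
      then have "k < m" using k by auto
      then have "X k J \<le> (real k - real lo + 1) * \<eta>" using Suc.IH k by auto
      also have "\<dots> \<le> B - \<eta>"
      proof -
        have "real k - real lo + 1 \<le> real m - real lo" using \<open>k < m\<close> by simp
        then have "(real k - real lo + 1) * \<eta> \<le> (real m - real lo) * \<eta>" using eta by (rule mult_right_mono)
        then show ?thesis unfolding B_def by (simp add: algebra_simps)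
      qed
      finally show ?thesis using trans_nonneg[OF lm] by (simp add: mult_left_mono)
    qed
  qed
  have Bpos: "0 \<le> B - \<eta>"
  proof -
    have "0 \<le> real m - real lo" using m by simp
    then have "0 \<le> (real m - real lo) * \<eta>" using eta by simp
    then show ?thesis unfolding B_def by (simp add: algebra_simps)
  qed
  have o2: "(\<Sum>k\<in>{lo..n} - {m}. trans lm m k * (B - \<eta>)) \<le> (1 - s) * (B - \<eta>)"
  proof -
    have "(\<Sum>k\<in>{lo..n} - {m}. trans lm m k) \<le> 1 - s"
      unfolding s_def by (rule others_le[OF lm mge]) (use lo in auto)
    then show ?thesis using Bpos by (simp add: sum_distrib_right[symmetric] mult_right_mono)
  qed
  have o3: "s * X m J \<le> s * B" using Suc.IH[OF m] s0 by (simp add: B_def mult_left_mono)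
  have "X m (Suc J) \<le> a m + s * B + (1 - s) * (B - \<eta>)"
    using step[OF m, of J] spl o1 o2 o3 by linarith
  also have "\<dots> = a m + B - (1 - s) * \<eta>" by (simp add: algebra_simps)
  also have "\<dots> \<le> B" using am[OF m] by (simp add: s_def)
  finally show ?case by (simp add: B_def)
qed



lemma swap_lem: "(\<Sum>t<J. \<Sum>k\<in>A. c k * g k t) = (\<Sum>k\<in>A. c k * (\<Sum>t<J. g k t))" for c :: "nat \<Rightarrow> real"
  by (simp add: sum.swap[of _ "{..<J}"] sum_distrib_left)

lemma am_lemma:
  assumes lm: "0 < lm" "lm < 1" and lo: "2 \<le> lo" and m: "m \<in> {lo..n}"
    and f: "\<And>k. 0 \<le> f k"
  shows "f m \<le> (1 - trans lm m m) * (\<Sum>k\<in>{lo..n}. f k / (1 - trans lm k k))"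
proof -
  have pos: "0 < 1 - trans lm k k" if "k \<in> {lo..n}" for k using stay_lt[OF lm] that lo by auto
  have "f m / (1 - trans lm m m) \<le> (\<Sum>k\<in>{lo..n}. f k / (1 - trans lm k k))"
    by (rule member_le_sum) (use m f pos in \<open>auto intro: divide_nonneg_pos\<close>)
  then show ?thesis using pos[OF m] by (simp add: divide_le_eq mult.commute)
qed

definition "D2G lm n = (\<Sum>k\<in>{2..n}. 1 / (1 - trans lm k k))"
definition "D3G lm n = (\<Sum>k\<in>{3..n}. 1 / (1 - trans lm k k))"
definition "eta3G lm n = (\<Sum>k\<in>{3..n}. trans lm k 1 / (1 - trans lm k k))"
definition "tauG lm n = (\<Sum>k\<in>{2..n}. trans lm k 1)"

locale game =
  fixes lm :: real and n :: nat
  assumes lm0: "0 < lm" and lm1: "lm < 1" and n2: "2 \<le> n"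
begin

lemmas lm = lm0 lm1

abbreviation "D2 \<equiv> D2G lm n"
abbreviation "D3 \<equiv> D3G lm n"
abbreviation "eta3 \<equiv> eta3G lm n"
abbreviation "tau \<equiv> tauG lm n"
lemmas D2_def = D2G_def[of lm n]
lemmas D3_def = D3G_def[of lm n]
lemmas eta3_def = eta3G_def[of lm n]
lemmas tau_def = tauG_def[of lm n]

lemma D2_nonneg: "0 \<le> D2" unfolding D2_def
  by (intro sum_nonneg) (use stay_lt[OF lm] in \<open>auto intro: less_imp_le\<close>)
lemma D3_nonneg: "0 \<le> D3" unfolding D3_def
  by (intro sum_nonneg) (use stay_lt[OF lm] in \<open>auto intro: less_imp_le\<close>)
lemma eta3_nonneg: "0 \<le> eta3" unfolding eta3_def
  by (intro sum_nonneg divide_nonneg_nonneg trans_nonneg[OF lm]) (use stay_lt[OF lm] in \<open>auto intro: less_imp_le\<close>)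

lemma tsum: "m \<in> {2..n} \<Longrightarrow> trans lm m 1 + (\<Sum>k\<in>{2..n}. trans lm m k) = 1"
proof -
  assume m: "m \<in> {2..n}"
  have "{1..n} = insert 1 {2..n}" using n2 by auto
  then show ?thesis using trans_sum[OF lm, of m n] m by simp
qed

definition "M m J = (\<Sum>t<J. Fs lm n m t)"

lemma M_Suc: "M m (Suc J) = trans lm m 1 + (\<Sum>k\<in>{2..n}. trans lm m k * M k J)"
  unfolding M_def sum.lessThan_Suc_shift Fs_0 Fs_Suc swap_lem ..

lemma M_le1: "m \<in> {2..n} \<Longrightarrow> M m J \<le> 1"
proof (induction J arbitrary: m)
  case 0 then show ?case by (simp add: M_def)
next
  case (Suc J)
  have "(\<Sum>k\<in>{2..n}. trans lm m k * M k J) \<le> (\<Sum>k\<in>{2..n}. trans lm m k)"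
    by (rule sum_mono) (use Suc.IH trans_nonneg[OF lm] in \<open>auto intro: mult_left_le\<close>)
  then show ?case unfolding M_Suc using tsum[OF Suc.prems] by linarith
qed

definition "Rsum m J = (\<Sum>K<J. 1 - M m K)"

lemma Rsum_Suc: "m \<in> {2..n} \<Longrightarrow> Rsum m (Suc J) = 1 + (\<Sum>k\<in>{2..n}. trans lm m k * Rsum k J)"
proof -
  assume m: "m \<in> {2..n}"
  have "1 - M m (Suc K) = (\<Sum>k\<in>{2..n}. trans lm m k * (1 - M k K))" for K
    unfolding M_Suc using tsum[OF m] by (simp add: algebra_simps sum_subtractf)
  then show ?thesis unfolding Rsum_def sum.lessThan_Suc_shift
    by (simp add: M_def swap_lem)
qed

lemma Rsum_bound: "m \<in> {2..n} \<Longrightarrow> Rsum m J \<le> (real m - 2 + 1) * D2"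
  using gen_bound[OF lm, of 2 n Rsum "\<lambda>_. 1" D2 m J] Rsum_Suc D2_nonneg
    am_lemma[OF lm, of 2 _ n "\<lambda>_. 1"]
  by (auto simp: Rsum_def D2_def)

lemma Fs_sums: assumes m: "m \<in> {2..n}" shows "Fs lm n m sums 1"
proof -
  have nn: "0 \<le> 1 - M m K" for K using M_le1[OF m] by simp
  have "summable (\<lambda>K. 1 - M m K)"
    by (rule summableI_nonneg_bounded[OF nn]) (use Rsum_bound[OF m] in \<open>auto simp: Rsum_def\<close>)
  then have "(\<lambda>K. 1 - M m K) \<longlonglongrightarrow> 0" by (rule summable_LIMSEQ_zero)
  then have "(\<lambda>K. 1 - (1 - M m K)) \<longlonglongrightarrow> 1 - 0" by (intro tendsto_diff tendsto_const)
  then show ?thesis unfolding sums_def by (simp add: M_def)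
qed

definition "Es m J = (\<Sum>t<J. real (Suc t) * Fs lm n m t)"

lemma Es_Suc: "Es m (Suc J) = M m (Suc J) + (\<Sum>k\<in>{2..n}. trans lm m k * Es k J)"
proof -
  have "Es m (Suc J) = Fs lm n m 0 + (\<Sum>t<J. Fs lm n m (Suc t) + real (Suc t) * Fs lm n m (Suc t))"
    unfolding Es_def sum.lessThan_Suc_shift by (simp add: algebra_simps)
  also have "\<dots> = M m (Suc J) + (\<Sum>t<J. real (Suc t) * Fs lm n m (Suc t))"
    unfolding M_def sum.lessThan_Suc_shift sum.distrib by simp
  also have "(\<Sum>t<J. real (Suc t) * Fs lm n m (Suc t)) = (\<Sum>k\<in>{2..n}. trans lm m k * Es k J)"
    unfolding Fs_Suc Es_def sum_distrib_left[symmetric] swap_lem[symmetric]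
    by (simp add: sum_distrib_left algebra_simps)
  finally show ?thesis .
qed

lemma Es_bound: "m \<in> {2..n} \<Longrightarrow> Es m J \<le> (real m - 2 + 1) * D2"
proof -
  assume m: "m \<in> {2..n}"
  have "Es m J \<le> (real m - real (2::nat) + 1) * D2"
  proof (rule gen_bound[OF lm, of 2 n Es "\<lambda>_. 1" D2 m J])
    fix m' J' assume "m' \<in> {2..n}"
    then show "Es m' (Suc J') \<le> 1 + (\<Sum>k\<in>{2..n}. trans lm m' k * Es k J')"
      using Es_Suc[of m' J'] M_le1[of m' "Suc J'"] by linarith
  next
    fix m' assume "m' \<in> {2..n}"
    then show "1 \<le> (1 - trans lm m' m') * D2"
      using am_lemma[OF lm, of 2 m' n "\<lambda>_. 1"] by (simp add: D2_def)
  qed (use m D2_nonneg in \<open>auto simp: Es_def\<close>)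
  then show ?thesis by simp
qed

definition "Einf m = (\<Sum>t. real (Suc t) * Fs lm n m t)"

lemma Es_summable: "m \<in> {2..n} \<Longrightarrow> summable (\<lambda>t. real (Suc t) * Fs lm n m t)"
  by (rule summableI_nonneg_bounded[where x = "(real m - 2 + 1) * D2"])
     (use Es_bound Fs_nonneg[OF lm] in \<open>auto simp: Es_def\<close>)

lemma Es_lim: "m \<in> {2..n} \<Longrightarrow> (\<lambda>J. Es m J) \<longlonglongrightarrow> Einf m"
  unfolding Es_def Einf_def by (rule summable_LIMSEQ) (rule Es_summable)

lemma M_lim: "m \<in> {2..n} \<Longrightarrow> (\<lambda>J. M m J) \<longlonglongrightarrow> 1"
  using Fs_sums unfolding sums_def M_def by blast

lemma Einf_rec: assumes m: "m \<in> {2..n}"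
  shows "Einf m = 1 + (\<Sum>k\<in>{2..n}. trans lm m k * Einf k)"
proof -
  have a: "(\<lambda>J. Es m (Suc J)) \<longlonglongrightarrow> Einf m" using Es_lim[OF m] by (rule LIMSEQ_Suc)
  have b: "(\<lambda>J. M m (Suc J) + (\<Sum>k\<in>{2..n}. trans lm m k * Es k J)) \<longlonglongrightarrow> 1 + (\<Sum>k\<in>{2..n}. trans lm m k * Einf k)"
    by (intro tendsto_add tendsto_sum tendsto_mult tendsto_const LIMSEQ_Suc M_lim m Es_lim) auto
  show ?thesis using LIMSEQ_unique[OF a] b unfolding Es_Suc by simp
qed

lemma tau_pos: "0 < tau"
proof -
  have "0 < trans lm 2 1" by (rule trans_1_pos[OF lm]) simp
  also have "\<dots> \<le> tau" unfolding tau_def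
    by (rule member_le_sum) (use n2 trans_nonneg[OF lm] in auto)
  finally show ?thesis .
qed

lemma Einf_lower: assumes m: "m \<in> {2..n}" shows "1 / tau \<le> Einf m"
proof -
  define mu where "mu = Min (Einf ` {2..n})"
  have ne: "Einf ` {2..n} \<noteq> {}" using n2 by auto
  have "mu \<in> Einf ` {2..n}" unfolding mu_def by (rule Min_in) (use ne in auto)
  then obtain k0 where k0: "k0 \<in> {2..n}" "Einf k0 = mu" by auto
  have le: "mu \<le> Einf k" if "k \<in> {2..n}" for k unfolding mu_def using that by auto
  have "(\<Sum>k\<in>{2..n}. trans lm k0 k * mu) \<le> (\<Sum>k\<in>{2..n}. trans lm k0 k * Einf k)"
    by (rule sum_mono) (use le trans_nonneg[OF lm] in \<open>auto intro: mult_left_mono\<close>)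
  moreover have "(\<Sum>k\<in>{2..n}. trans lm k0 k * mu) = (1 - trans lm k0 1) * mu"
    using tsum[OF k0(1)] by (simp add: sum_distrib_right[symmetric])
  ultimately have "mu \<ge> 1 + (1 - trans lm k0 1) * mu"
    using Einf_rec[OF k0(1)] k0(2) by linarith
  then have A: "1 \<le> trans lm k0 1 * mu" by (simp add: algebra_simps)
  have tp: "0 < trans lm k0 1" by (rule trans_1_pos[OF lm]) (use k0 in auto)
  have "trans lm k0 1 \<le> tau" unfolding tau_def
    by (rule member_le_sum) (use k0 trans_nonneg[OF lm] in auto)
  then have "1 / tau \<le> 1 / trans lm k0 1" using tp by (simp add: frac_le)
  also have "\<dots> \<le> mu" using A tp by (simp add: divide_le_eq mult.commute)
  also have "\<dots> \<le> Einf m" using le[OF m] .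
  finally show ?thesis .
qed

end



context game begin

definition "Hsum m J = (\<Sum>t<J. Hs lm n m t)"

lemma Hsum_Suc: "Hsum m (Suc J) = M m (Suc J) + (\<Sum>k\<in>{3..n}. trans lm m k * Hsum k J)"
proof -
  have "Hsum m (Suc J) = Fs lm n m 0 + (\<Sum>t<J. Fs lm n m (Suc t) + (\<Sum>k\<in>{3..n}. trans lm m k * Hs lm n k t))"
    unfolding Hsum_def sum.lessThan_Suc_shift Hs_0 Hs_Suc'[OF n2] Fs_0 by simp
  also have "\<dots> = M m (Suc J) + (\<Sum>k\<in>{3..n}. trans lm m k * Hsum k J)"
    unfolding M_def sum.lessThan_Suc_shift sum.distrib Hsum_def swap_lem by simp
  finally show ?thesis .
qed

lemma Hsum_bound: assumes "3 \<le> n" shows "Hsum n J \<le> (real n - 2) * D3"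
proof -
  have "Hsum n J \<le> (real n - real (3::nat) + 1) * D3"
  proof (rule gen_bound[OF lm, of 3 n Hsum "\<lambda>_. 1" D3 n J])
    fix m' J' assume "m' \<in> {3..n}"
    then show "Hsum m' (Suc J') \<le> 1 + (\<Sum>k\<in>{3..n}. trans lm m' k * Hsum k J')"
      using Hsum_Suc[of m' J'] M_le1[of m' "Suc J'"] by auto
  next
    fix m' assume "m' \<in> {3..n}"
    then show "1 \<le> (1 - trans lm m' m') * D3"
      using am_lemma[OF lm, of 3 m' n "\<lambda>_. 1"] by (simp add: D3_def)
  qed (use assms D3_nonneg in \<open>auto simp: Hsum_def\<close>)
  then show ?thesis by simp
qed

definition "Nsum m J = (\<Sum>t<J. Ns lm n m t)"

lemma Nsum_Suc: "Nsum m (Suc J) = trans lm m 1 + (\<Sum>k\<in>{3..n}. trans lm m k * Nsum k J)"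
  unfolding Nsum_def sum.lessThan_Suc_shift Ns_0 Ns_Suc[OF n2] swap_lem ..

lemma Nsum_bound: assumes "3 \<le> n" shows "Nsum n J \<le> (real n - 2) * eta3"
proof -
  have "Nsum n J \<le> (real n - real (3::nat) + 1) * eta3"
  proof (rule gen_bound[OF lm, of 3 n Nsum "\<lambda>m. trans lm m 1" eta3 n J])
    fix m' J' assume "m' \<in> {3..n}"
    then show "Nsum m' (Suc J') \<le> trans lm m' 1 + (\<Sum>k\<in>{3..n}. trans lm m' k * Nsum k J')"
      using Nsum_Suc[of m' J'] by auto
  next
    fix m' assume "m' \<in> {3..n}"
    then show "trans lm m' 1 \<le> (1 - trans lm m' m') * eta3"
      using am_lemma[OF lm, of 3 m' n "\<lambda>k. trans lm k 1"] trans_nonneg[OF lm] by (simp add: eta3_def)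
  qed (use assms eta3_nonneg in \<open>auto simp: Nsum_def\<close>)
  then show ?thesis by simp
qed

lemma CP_term: "(\<Sum>xs\<in>complete_paths n (Suc t). f xs) = (\<Sum>ys\<in>St n t. f (ys @ [1]))"
  by (rule sum_CP_Suc) (use n2 in simp)

lemma hit1': "set ys \<subseteq> {2..n} \<Longrightarrow> hit_time (Suc 0) (ys @ [Suc 0]) = Suc (length ys)"
  using hit1[of ys n] by simp

lemma expT1: "expected_T n 1 lm = Einf n"
proof -
  define g where "g t = (\<Sum>xs\<in>complete_paths n t. path_prob lm n xs * real (hit_time 1 xs))" for t
  have g0: "g 0 = 0" by (simp add: g_def CP_0)
  have gS: "g (Suc t) = real (Suc t) * Fs lm n n t" for t
  proof -
    have "g (Suc t) = (\<Sum>ys\<in>St n t. path_prob lm n (ys @ [1]) * real (hit_time 1 (ys @ [1])))"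
      unfolding g_def CP_term ..
    also have "\<dots> = (\<Sum>ys\<in>St n t. real (Suc t) * path_prob lm n (ys @ [1]))"
      by (intro sum.cong refl) (auto simp: St_def hit1')
    finally show ?thesis by (simp add: Fs_def sum_distrib_left)
  qed
  have "(\<lambda>t. g (Suc t)) sums Einf n" unfolding gS Einf_def
    by (rule summable_sums, rule Es_summable) (use n2 in simp)
  then have "g sums Einf n" using g0 by (simp add: sums_Suc_iff)
  then show ?thesis by (simp add: expected_T_def g_def[abs_def] sums_iff)
qed

lemma expT2: assumes "3 \<le> n" shows "expected_T n 2 lm \<le> (real n - 2) * D3" "0 \<le> expected_T n 2 lm"
proof -
  define g where "g t = (\<Sum>xs\<in>complete_paths n t. path_prob lm n xs * real (hit_time 2 xs))" for t
  have g0: "g 0 = 0" by (simp add: g_def CP_0)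
  have gS: "g (Suc t) = Hs lm n n t" for t
    unfolding g_def CP_term Hs_def ..
  have sm: "summable (Hs lm n n)"
    by (rule summableI_nonneg_bounded[where x = "(real n - 2) * D3"])
       (use Hsum_bound[OF assms] Hs_nonneg[OF lm] in \<open>auto simp: Hsum_def\<close>)
  have "(\<lambda>t. g (Suc t)) sums suminf (Hs lm n n)" unfolding gS using sm by (rule summable_sums)
  then have "g sums suminf (Hs lm n n)" using g0 by (simp add: sums_Suc_iff)
  then have e: "expected_T n 2 lm = suminf (Hs lm n n)" by (simp add: expected_T_def g_def[abs_def] sums_iff)
  show "expected_T n 2 lm \<le> (real n - 2) * D3" unfolding e
    by (rule suminf_le_const[OF sm]) (use Hsum_bound[OF assms] in \<open>auto simp: Hsum_def\<close>)
  show "0 \<le> expected_T n 2 lm" unfolding e by (rule suminf_nonneg[OF sm]) (use Hs_nonneg[OF lm] in auto)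
qed

lemma probT: assumes "3 \<le> n" shows "prob_T2_lt_T1 n lm \<le> 1" "1 - (real n - 2) * eta3 \<le> prob_T2_lt_T1 n lm"
proof -
  define g where "g t = (\<Sum>xs\<in>{xs \<in> complete_paths n t. hit_time 2 xs < hit_time 1 xs}. path_prob lm n xs)" for t
  have g0: "g 0 = 0" by (simp add: g_def CP_0)
  have gS: "g (Suc t) = Qs lm n n t" for t
  proof -
    have "g (Suc t) = (\<Sum>xs\<in>complete_paths n (Suc t). if hit_time 2 xs < hit_time 1 xs then path_prob lm n xs else 0)"
      unfolding g_def by (rule sum.inter_filter[OF finite_CP])
    also have "\<dots> = (\<Sum>ys\<in>St n t. if hit_time 2 (ys @ [1]) < hit_time 1 (ys @ [1]) then path_prob lm n (ys @ [1]) else 0)"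
      unfolding CP_term ..
    also have "\<dots> = Qs lm n n t" unfolding Qs_def
    proof (intro sum.cong refl)
      fix ys assume "ys \<in> St n t"
      then have s: "set ys \<subseteq> {2..n}" and l: "length ys = t" by (auto simp: St_def)
      show "(if hit_time 2 (ys @ [1]) < hit_time 1 (ys @ [1]) then path_prob lm n (ys @ [1]) else 0) =
            (if 2 \<in> set ys then path_prob lm n (ys @ [1]) else 0)"
        using hit1[OF s] hit2_lt[OF s] by simp
    qed
    finally show ?thesis .
  qed
  have smN: "summable (Ns lm n n)"
    by (rule summableI_nonneg_bounded[where x = "(real n - 2) * eta3"])
       (use Nsum_bound[OF assms] Ns_nonneg[OF lm] in \<open>auto simp: Nsum_def\<close>)
  have sF: "Fs lm n n sums 1" by (rule Fs_sums) (use n2 in simp)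
  have "(\<lambda>t. Fs lm n n t - Ns lm n n t) sums (1 - suminf (Ns lm n n))"
    by (rule sums_diff[OF sF summable_sums[OF smN]])
  then have sQ: "Qs lm n n sums (1 - suminf (Ns lm n n))" by (simp add: Ns_def)
  have "(\<lambda>t. g (Suc t)) sums (1 - suminf (Ns lm n n))" unfolding gS by (rule sQ)
  then have "g sums (1 - suminf (Ns lm n n))" using g0 by (simp add: sums_Suc_iff)
  then have e: "prob_T2_lt_T1 n lm = 1 - suminf (Ns lm n n)" by (simp add: prob_T2_lt_T1_def g_def[abs_def] sums_iff)
  have "0 \<le> suminf (Ns lm n n)" by (rule suminf_nonneg[OF smN]) (use Ns_nonneg[OF lm] in auto)
  then show "prob_T2_lt_T1 n lm \<le> 1" unfolding e by simp
  have "suminf (Ns lm n n) \<le> (real n - 2) * eta3"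
    by (rule suminf_le_const[OF smN]) (use Nsum_bound[OF assms] in \<open>auto simp: Nsum_def\<close>)
  then show "1 - (real n - 2) * eta3 \<le> prob_T2_lt_T1 n lm" unfolding e by simp
qed

end



lemma ev01: "eventually (\<lambda>x::real. 0 < x \<and> x < 1) (at_right 0)"
  unfolding eventually_at_right_field by (intro exI[of _ 1]) auto

lemma lim_powr0: "0 < e \<Longrightarrow> ((\<lambda>x::real. x powr e) \<longlongrightarrow> 0) (at_right 0)"
  by (rule tendsto_zero_powrI) (auto intro: eventually_mono[OF ev01])

lemma lim_qq: "2 \<le> m \<Longrightarrow> ((\<lambda>x. qq x m) \<longlongrightarrow> 0) (at_right 0)"
  unfolding qq_def by (rule lim_powr0) simp

lemma trans1_le: assumes "0 < x" "x < 1" "2 \<le> m"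
  shows "trans x m 1 \<le> real m * x / (1 - qq x m ^ m)"
proof -
  note b = qq_bounds[OF assms] qq_pow_m[OF assms]
  have "real m * (1 - qq x m) * x \<le> real m * x" using b assms by (simp add: mult_le_cancel_left1 mult.assoc)
  then show ?thesis unfolding trans_1[OF assms] using b by (simp add: divide_right_mono)
qed

lemma lim_trans1: assumes "2 \<le> m" shows "((\<lambda>x. trans x m 1) \<longlongrightarrow> 0) (at_right 0)"
proof (rule tendsto_sandwich[where f = "\<lambda>_. 0" and h = "\<lambda>x. real m * x / (1 - qq x m ^ m)"])
  show "\<forall>\<^sub>F x in at_right 0. 0 \<le> trans x m 1"
    by (rule eventually_mono[OF ev01]) (auto intro: trans_nonneg)
  show "\<forall>\<^sub>F x in at_right 0. trans x m 1 \<le> real m * x / (1 - qq x m ^ m)"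
    by (rule eventually_mono[OF ev01]) (use trans1_le assms in auto)
  have "((\<lambda>x. real m * x / (1 - qq x m ^ m)) \<longlongrightarrow> real m * 0 / (1 - 0 ^ m)) (at_right 0)"
    by (intro tendsto_intros lim_qq assms) (use assms in \<open>simp add: power_0_left\<close>)
  then show "((\<lambda>x. real m * x / (1 - qq x m ^ m)) \<longlongrightarrow> 0) (at_right 0)" by simp
qed simp

lemma ratio_le: assumes "0 < x" "x < 1" "2 \<le> m" "3 \<le> k"
  shows "trans x m 1 / (1 - trans x k k) \<le>
    real m * x powr (1 - 1 / (real k - 1)) / ((1 - qq x m ^ m) * real k * (1 - qq x k) ^ (k - 1))"
proof -
  have k2: "2 \<le> k" using assms by simp
  note bm = qq_bounds[OF assms(1,2,3)] qq_pow_m[OF assms(1,2,3)]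
  note bk = qq_bounds[OF assms(1,2) k2]
  define d where "d = real k * (1 - qq x k) ^ (k - 1) * qq x k"
  have d0: "0 < d" unfolding d_def using bk k2 by simp
  have d1: "d \<le> 1 - trans x k k" unfolding d_def by (rule one_minus_stay[OF assms(1,2) k2])
  have t0: "0 \<le> trans x m 1" by (rule trans_nonneg) (use assms in auto)
  have "trans x m 1 / (1 - trans x k k) \<le> trans x m 1 / d"
    by (rule divide_left_mono[OF d1 t0]) (use d0 d1 in auto)
  also have "\<dots> \<le> (real m * x / (1 - qq x m ^ m)) / d"
    by (rule divide_right_mono[OF trans1_le[OF assms(1-3)]]) (use d0 in simp)
  also have "\<dots> = real m * (x / qq x k) / ((1 - qq x m ^ m) * real k * (1 - qq x k) ^ (k - 1))"
    unfolding d_def by (simp add: field_simps)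
  also have "x / qq x k = x powr (1 - 1 / (real k - 1))"
    unfolding qq_def powr_diff using assms by simp
  finally show ?thesis .
qed

lemma lim_ratio: assumes "2 \<le> m" "3 \<le> k"
  shows "((\<lambda>x. trans x m 1 / (1 - trans x k k)) \<longlongrightarrow> 0) (at_right 0)"
proof (rule tendsto_sandwich[where f = "\<lambda>_. 0" and
      h = "\<lambda>x. real m * x powr (1 - 1 / (real k - 1)) / ((1 - qq x m ^ m) * real k * (1 - qq x k) ^ (k - 1))"])
  show "\<forall>\<^sub>F x in at_right 0. 0 \<le> trans x m 1 / (1 - trans x k k)"
    by (rule eventually_mono[OF ev01])
       (use assms in \<open>auto intro!: divide_nonneg_pos trans_nonneg stay_lt\<close>)
  show "\<forall>\<^sub>F x in at_right 0. trans x m 1 / (1 - trans x k k) \<le>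
    real m * x powr (1 - 1 / (real k - 1)) / ((1 - qq x m ^ m) * real k * (1 - qq x k) ^ (k - 1))"
    by (rule eventually_mono[OF ev01]) (use ratio_le assms in auto)
  have e: "0 < 1 - 1 / (real k - 1)" using assms by (simp add: field_simps)
  have "((\<lambda>x. real m * x powr (1 - 1 / (real k - 1)) / ((1 - qq x m ^ m) * real k * (1 - qq x k) ^ (k - 1)))
     \<longlongrightarrow> real m * 0 / ((1 - 0 ^ m) * real k * (1 - 0) ^ (k - 1))) (at_right 0)"
    by (intro tendsto_intros lim_qq lim_powr0 e) (use assms in \<open>auto simp: power_0_left\<close>)
  then show "((\<lambda>x. real m * x powr (1 - 1 / (real k - 1)) / ((1 - qq x m ^ m) * real k * (1 - qq x k) ^ (k - 1)))
     \<longlongrightarrow> 0) (at_right 0)" by simp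
qed simp

lemma lim_tau: "((\<lambda>x. tauG x n) \<longlongrightarrow> 0) (at_right 0)"
proof -
  have "((\<lambda>x. \<Sum>k\<in>{2..n}. trans x k 1) \<longlongrightarrow> (\<Sum>k\<in>{2..n}. 0)) (at_right 0)"
    by (intro tendsto_sum lim_trans1) auto
  then show ?thesis by (simp add: tauG_def)
qed

lemma lim_tauD3: "((\<lambda>x. tauG x n * D3G x n) \<longlongrightarrow> 0) (at_right 0)"
proof -
  have "((\<lambda>x. \<Sum>i\<in>{2..n}. \<Sum>j\<in>{3..n}. trans x i 1 / (1 - trans x j j)) \<longlongrightarrow> (\<Sum>i\<in>{2..n}. \<Sum>j\<in>{3..n}. 0)) (at_right 0)"
    by (intro tendsto_sum lim_ratio) auto
  then show ?thesis by (simp add: tauG_def D3G_def sum_product)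
qed

lemma lim_eta3: "((\<lambda>x. eta3G x n) \<longlongrightarrow> 0) (at_right 0)"
proof -
  have "((\<lambda>x. \<Sum>j\<in>{3..n}. trans x j 1 / (1 - trans x j j)) \<longlongrightarrow> (\<Sum>j\<in>{3..n}. 0)) (at_right 0)"
    by (intro tendsto_sum lim_ratio) auto
  then show ?thesis by (simp add: eta3G_def)
qed



lemma L1: assumes "2 \<le> n" shows "filterlim (\<lambda>x. expected_T n 1 x) at_top (at_right 0)"
proof (rule filterlim_at_top_mono)
  show "LIM x at_right 0. inverse (tauG x n) :> at_top"
    by (rule filterlim_inverse_at_top[OF lim_tau])
       (rule eventually_mono[OF ev01], use game.tau_pos game.intro assms in blast)
  show "\<forall>\<^sub>F x in at_right 0. inverse (tauG x n) \<le> expected_T n 1 x"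
  proof (rule eventually_mono[OF ev01])
    fix x :: real assume x: "0 < x \<and> x < 1"
    interpret game x n using x assms by unfold_locales auto
    show "inverse (tauG x n) \<le> expected_T n 1 x"
      using Einf_lower[of n] expT1 assms by (simp add: inverse_eq_divide)
  qed
qed

lemma L2: assumes "3 \<le> n" shows "((\<lambda>x. prob_T2_lt_T1 n x) \<longlongrightarrow> 1) (at_right 0)"
proof (rule tendsto_sandwich[where f = "\<lambda>x. 1 - (real n - 2) * eta3G x n" and h = "\<lambda>_. 1"])
  show "\<forall>\<^sub>F x in at_right 0. 1 - (real n - 2) * eta3G x n \<le> prob_T2_lt_T1 n x"
  proof (rule eventually_mono[OF ev01])
    fix x :: real assume x: "0 < x \<and> x < 1"
    interpret game x n using x assms by unfold_locales auto
    show "1 - (real n - 2) * eta3G x n \<le> prob_T2_lt_T1 n x" using probT(2)[OF assms] .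
  qed
  show "\<forall>\<^sub>F x in at_right 0. prob_T2_lt_T1 n x \<le> 1"
  proof (rule eventually_mono[OF ev01])
    fix x :: real assume x: "0 < x \<and> x < 1"
    interpret game x n using x assms by unfold_locales auto
    show "prob_T2_lt_T1 n x \<le> 1" using probT(1)[OF assms] .
  qed
  have "((\<lambda>x. 1 - (real n - 2) * eta3G x n) \<longlongrightarrow> 1 - (real n - 2) * 0) (at_right 0)"
    by (intro tendsto_intros lim_eta3)
  then show "((\<lambda>x. 1 - (real n - 2) * eta3G x n) \<longlongrightarrow> 1) (at_right 0)" by simp
qed simp

lemma L3: assumes "3 \<le> n"
  shows "((\<lambda>x. expected_T n 2 x / expected_T n 1 x) \<longlongrightarrow> 0) (at_right 0)"
proof (rule tendsto_sandwich[where f = "\<lambda>_. 0" and h = "\<lambda>x. (real n - 2) * (tauG x n * D3G x n)"])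
  have "\<forall>\<^sub>F x in at_right 0. 0 \<le> expected_T n 2 x / expected_T n 1 x \<and>
      expected_T n 2 x / expected_T n 1 x \<le> (real n - 2) * (tauG x n * D3G x n)"
  proof (rule eventually_mono[OF ev01])
    fix x :: real assume x: "0 < x \<and> x < 1"
    interpret game x n using x assms by unfold_locales auto
    have n: "n \<in> {2..n}" using assms by simp
    have E1: "1 / tau \<le> expected_T n 1 x" using Einf_lower[OF n] expT1 by simp
    have tp: "0 < tau" by (rule tau_pos)
    have E1p: "0 < expected_T n 1 x" using E1 tp by (meson divide_pos_pos less_le_trans zero_less_one)
    have E2: "0 \<le> expected_T n 2 x" "expected_T n 2 x \<le> (real n - 2) * D3" using expT2[OF assms] by auto
    have "expected_T n 2 x / expected_T n 1 x \<le> expected_T n 2 x / (1 / tau)"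
      by (rule divide_left_mono[OF E1 E2(1)]) (use E1p tp in auto)
    also have "\<dots> = expected_T n 2 x * tau" by simp
    also have "\<dots> \<le> (real n - 2) * D3 * tau" using E2(2) tp by (simp add: mult_right_mono)
    finally have "expected_T n 2 x / expected_T n 1 x \<le> (real n - 2) * (tau * D3)" by (simp add: ac_simps)
    then show "0 \<le> expected_T n 2 x / expected_T n 1 x \<and>
      expected_T n 2 x / expected_T n 1 x \<le> (real n - 2) * (tauG x n * D3G x n)"
      using E1p E2(1) by simp
  qed
  then show "\<forall>\<^sub>F x in at_right 0. 0 \<le> expected_T n 2 x / expected_T n 1 x"
    "\<forall>\<^sub>F x in at_right 0. expected_T n 2 x / expected_T n 1 x \<le> (real n - 2) * (tauG x n * D3G x n)"
    by (auto elim: eventually_mono)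
  have "((\<lambda>x. (real n - 2) * (tauG x n * D3G x n)) \<longlongrightarrow> (real n - 2) * 0) (at_right 0)"
    by (intro tendsto_intros lim_tauD3)
  then show "((\<lambda>x. (real n - 2) * (tauG x n * D3G x n)) \<longlongrightarrow> 0) (at_right 0)" by simp
qed simp

lemma lam_bound: assumes "\<rho> \<le> 0" "0 < c" "c < d"
  shows "0 < util \<rho> c / util \<rho> d" "util \<rho> c / util \<rho> d \<le> c / d"
proof -
  have d0: "0 < d" using assms by simp
  have both: "0 < util \<rho> c / util \<rho> d \<and> util \<rho> c / util \<rho> d \<le> c / d"
  proof (cases "\<rho> = 0")
    case True then show ?thesis using assms by (simp add: util_def)
  next
    case False
    then have r: "\<rho> < 0" using assms by simp
    define a where "a = - \<rho>"
    have a: "0 < a" using r by (simp add: a_def)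
    have u: "util \<rho> x = (exp (a * x) - 1) / a" for x
      using False by (simp add: util_def a_def field_simps)
    have ec: "1 < exp (a * c)" using a assms by simp
    have ed: "1 < exp (a * d)" using a assms by simp
    have eq: "util \<rho> c / util \<rho> d = (exp (a * c) - 1) / (exp (a * d) - 1)"
      unfolding u using a by simp
    define t where "t = c / d"
    have t: "0 \<le> t" "t \<le> 1" using assms by (auto simp: t_def)
    have conv: "exp ((1 - t) *\<^sub>R 0 + t *\<^sub>R (a * d)) \<le> (1 - t) * exp 0 + t * exp (a * d)"
      by (rule convex_onD[OF exp_convex t]) auto
    have eq': "(1 - t) *\<^sub>R 0 + t *\<^sub>R (a * d) = a * c" using d0 by (simp add: t_def)
    have "exp (a * c) \<le> (1 - t) * exp 0 + t * exp (a * d)" using conv unfolding eq' .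
    then have "exp (a * c) - 1 \<le> t * (exp (a * d) - 1)" by (simp add: algebra_simps)
    then have "(exp (a * c) - 1) / (exp (a * d) - 1) \<le> t" using ed by (simp add: divide_le_eq)
    then show ?thesis unfolding eq t_def using ec ed by simp
  qed
  then show "0 < util \<rho> c / util \<rho> d" "util \<rho> c / util \<rho> d \<le> c / d" by auto
qed

lemma lam_filterlim: assumes "\<rho> \<le> 0"
  shows "filterlim (\<lambda>(v, s, c). lam \<rho> v s c) (at_right 0) ratio_to_infinity"
proof -
  define S :: "(real \<times> real \<times> real) set" where "S = {(v, s, c). 0 < v \<and> 0 < c \<and> 0 \<le> s \<and> c < v - s}"
  have evS: "eventually (\<lambda>x. x \<in> S) ratio_to_infinity"
    unfolding ratio_to_infinity_def eventually_inf_principal S_def by simp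
  have r: "filterlim (\<lambda>(v, s, c). (v - s) / c) at_top ratio_to_infinity"
    by (rule filterlim_mono[OF filterlim_filtercomap order_refl]) (simp add: ratio_to_infinity_def)
  have z: "((\<lambda>x. inverse ((\<lambda>(v, s, c). (v - s) / c) x)) \<longlongrightarrow> 0) ratio_to_infinity"
    by (rule tendsto_inverse_0_at_top[OF r])
  have bnd: "0 < (\<lambda>(v, s, c). lam \<rho> v s c) x \<and> (\<lambda>(v, s, c). lam \<rho> v s c) x \<le> inverse ((\<lambda>(v, s, c). (v - s) / c) x)"
    if "x \<in> S" for x
  proof -
    obtain v s c where x: "x = (v, s, c)" by (cases x) auto
    have h: "0 < c" "c < v - s" using that x by (auto simp: S_def)
    show ?thesis using lam_bound[OF assms h] x by (simp add: lam_def)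
  qed
  have t: "((\<lambda>(v, s, c). lam \<rho> v s c) \<longlongrightarrow> 0) ratio_to_infinity"
  proof (rule tendsto_sandwich[OF _ _ tendsto_const z])
    show "\<forall>\<^sub>F x in ratio_to_infinity. 0 \<le> (\<lambda>(v, s, c). lam \<rho> v s c) x"
      using evS by (rule eventually_mono) (use bnd in \<open>auto intro: less_imp_le\<close>)
    show "\<forall>\<^sub>F x in ratio_to_infinity. (\<lambda>(v, s, c). lam \<rho> v s c) x \<le> inverse ((\<lambda>(v, s, c). (v - s) / c) x)"
      using evS by (rule eventually_mono) (use bnd in auto)
  qed
  show ?thesis unfolding filterlim_at
    using t evS by (auto elim!: eventually_mono dest: bnd)
qed


theorem theorem4:
  fixes n :: nat and \<rho> :: real
  assumes "2 \<le> n" and "\<rho> \<le> 0"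
  shows "filterlim (\<lambda>(v, s, c). expected_T n 1 (lam \<rho> v s c)) at_top ratio_to_infinity
    \<and> (2 < n \<longrightarrow> ((\<lambda>(v, s, c). prob_T2_lt_T1 n (lam \<rho> v s c)) \<longlongrightarrow> 1) ratio_to_infinity)
    \<and> (2 < n \<longrightarrow> ((\<lambda>(v, s, c). expected_T n 2 (lam \<rho> v s c) / expected_T n 1 (lam \<rho> v s c))
            \<longlongrightarrow> 0) ratio_to_infinity)"
proof -
  have lamF: "filterlim (\<lambda>(v, s, c). lam \<rho> v s c) (at_right 0) ratio_to_infinity"
    by (rule lam_filterlim[OF assms(2)])
  have e: "\<And>f :: real \<Rightarrow> real. (\<lambda>(v, s, c). f (lam \<rho> v s c)) = (\<lambda>x. f ((\<lambda>(v, s, c). lam \<rho> v s c) x))"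
    by (auto simp: fun_eq_iff)
  have A: "filterlim (\<lambda>(v, s, c). expected_T n 1 (lam \<rho> v s c)) at_top ratio_to_infinity"
    unfolding e[of "expected_T n 1"] by (rule filterlim_compose[OF L1[OF assms(1)] lamF])
  have B: "((\<lambda>(v, s, c). prob_T2_lt_T1 n (lam \<rho> v s c)) \<longlongrightarrow> 1) ratio_to_infinity" if "2 < n"
  proof -
    have n3: "3 \<le> n" using that by simp
    show ?thesis unfolding e[of "prob_T2_lt_T1 n"] by (rule filterlim_compose[OF L2[OF n3] lamF])
  qed
  have C: "((\<lambda>(v, s, c). expected_T n 2 (lam \<rho> v s c) / expected_T n 1 (lam \<rho> v s c)) \<longlongrightarrow> 0) ratio_to_infinity" if "2 < n"
  proof -
    have n3: "3 \<le> n" using that by simp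
    show ?thesis unfolding e[of "\<lambda>l. expected_T n 2 l / expected_T n 1 l"]
      by (rule filterlim_compose[OF L3[OF n3] lamF])
  qed
  show ?thesis using A B C by blast
qed

end
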